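(* Let $K$ be a field of characteristic $\neq 2$, $n\ge1$, and let $\mathcal C$ be an EACP over $K$ with natural basis $\{h_1,\dots,h_n,r\}$ and structural constants $a_{ij},b_i$, and suppose $\det(a_{ij})_{i,j=1}^n\neq0$. Then $\mathcal C$ is centroidal: every $K$-linear map $T:\mathcal C\to\mathcal C$ with $TL_x=L_xT$ and $TR_x=R_xT$ for all $x\in\mathcal C$ (where $L_x(y)=xy$, $R_x(y)=yx$) is a scalar multiple of the identity, so that the centroid $\Gamma(\mathcal C)$ is isomorphic to $K$.
   Context: An EACP over a field $K$ (characteristic $\neq 2$) is a $K$-algebra $\mathcal C$ with a basis $\{h_1,\dots,h_n,r\}$ (called a natural basis) whose multiplication is determined by bilinearity from $$h_ir=rh_i=\tfrac12\Big(\sum_{j=1}^n a_{ij}h_j+b_ir\Big),\qquad h_ih_j=0\ (i,j=1,\dots,n),\qquad rr=0,$$ for some constants $a_{ij},b_i\in K$. The centroid $\Gamma(\mathcal A)$ of an algebra $\mathcal A$ is the set of linear maps $T:\mathcal A\to\mathcal A$ commuting with all left and right multiplication operators; $\mathcal A$ is centroidal if $\Gamma(\mathcal A)\cong K$. *)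

theory Defs
  imports "HOL-Analysis.Analysis"
begin

text \<open>The EACP with natural basis h_1..h_n, r is modelled as the coordinate space
  of functions 'n option => 'a, where coordinate Some i is the coefficient of h_i
  and coordinate None is the coefficient of r.  Structural constants:
  a :: 'a^'n^'n (a $ i $ j = a_ij), b :: 'a^'n (b $ i = b_i).\<close>

definition eacp_basis_prod :: "'a::field^'n^'n \<Rightarrow> 'a^'n \<Rightarrow> 'n option \<Rightarrow> 'n option \<Rightarrow> ('n option \<Rightarrow> 'a)"
  where "eacp_basis_prod a b p q =
    (case (p, q) of
       (Some i, None) \<Rightarrow> (\<lambda>k. case k of Some j \<Rightarrow> a $ i $ j / 2 | None \<Rightarrow> b $ i / 2)
     | (None, Some i) \<Rightarrow> (\<lambda>k. case k of Some j \<Rightarrow> a $ i $ j / 2 | None \<Rightarrow> b $ i / 2)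
     | _ \<Rightarrow> (\<lambda>k. 0))"

definition eacp_mult :: "'a::field^'n::finite^'n \<Rightarrow> 'a^'n \<Rightarrow> ('n option \<Rightarrow> 'a) \<Rightarrow> ('n option \<Rightarrow> 'a) \<Rightarrow> ('n option \<Rightarrow> 'a)"
  where "eacp_mult a b x y =
    (\<lambda>k. \<Sum>p\<in>UNIV. \<Sum>q\<in>UNIV. x p * y q * eacp_basis_prod a b p q k)"

definition coord_linear :: "(('n option \<Rightarrow> 'a::field) \<Rightarrow> ('n option \<Rightarrow> 'a)) \<Rightarrow> bool"
  where "coord_linear T \<longleftrightarrow>
    (\<forall>x y. T (\<lambda>k. x k + y k) = (\<lambda>k. T x k + T y k)) \<and> (\<forall>c x. T (\<lambda>k. c * x k) = (\<lambda>k. c * T x k))"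

definition eacp_centroid :: "'a::field^'n::finite^'n \<Rightarrow> 'a^'n \<Rightarrow> (('n option \<Rightarrow> 'a) \<Rightarrow> ('n option \<Rightarrow> 'a)) set"
  where "eacp_centroid a b = {T. coord_linear T \<and>
     (\<forall>x y. T (eacp_mult a b x y) = eacp_mult a b x (T y)) \<and>
     (\<forall>x y. T (eacp_mult a b y x) = eacp_mult a b (T y) x)}"

end

theory Submission
  imports Defs
begin

lemma ker:
  fixes a :: "'a::field^'n::finite^'n"
  assumes "det a \<noteq> 0" "\<And>j. (\<Sum>i\<in>UNIV. c i * a$i$j) = 0"
  shows "c i = 0"
proof -
  obtain B where B: "a ** B = mat 1"
    using invertible_right_inverse invertible_det_nz assms(1) by blast
  define v where "v = (\<chi> i. c i)"
  have "v v* a = 0" by (simp add: vector_matrix_mult_def vec_eq_iff v_def mult.commute assms(2))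
  then have "(v v* a) v* B = 0" by (simp add: vector_matrix_mult_def vec_eq_iff)
  then have "v = 0" by (simp add: vector_matrix_mul_assoc B)
  then show ?thesis by (simp add: v_def vec_eq_iff)
qed

lemma sum_option: "(\<Sum>p\<in>(UNIV::'n::finite option set). f p) = f None + (\<Sum>i\<in>UNIV. f (Some i))"
proof -
  have "(UNIV::'n option set) = insert None (range Some)" by (auto simp: UNIV_option_conv)
  moreover have "sum f (insert None (range Some)) = f None + (\<Sum>i\<in>UNIV. f (Some i))"
    by (subst sum.insert) (auto simp: sum.reindex)
  ultimately show ?thesis by simp
qed

lemma mult_Some:
  "eacp_mult a b x y (Some j) = (\<Sum>i\<in>UNIV. (x (Some i) * y None + x None * y (Some i)) * a$i$j) / 2"
  unfolding eacp_mult_def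
  apply (simp add: sum_option eacp_basis_prod_def)
  apply (simp add: sum_divide_distrib[symmetric] sum.distrib[symmetric] distrib_right add_divide_distrib[symmetric] ac_simps)
  apply (auto intro!: sum.cong simp: algebra_simps)?
  done

lemma mult_None:
  "eacp_mult a b x y None = (\<Sum>i\<in>UNIV. (x (Some i) * y None + x None * y (Some i)) * b$i) / 2"
  unfolding eacp_mult_def
  apply (simp add: sum_option eacp_basis_prod_def)
  apply (simp add: sum_divide_distrib[symmetric] sum.distrib[symmetric] distrib_right add_divide_distrib[symmetric] ac_simps)
  apply (auto intro!: sum.cong simp: algebra_simps)?
  done

lemma mult_comm: "eacp_mult a b x y = eacp_mult a b y x"
  apply (rule ext)
  subgoal for k by (cases k) (simp_all add: mult_Some mult_None ac_simps)
  apply (auto intro!: sum.cong simp: algebra_simps)?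
  done

lemma mult_r_Some: "eacp_mult a b (\<lambda>k. if k = None then 1 else 0) y (Some j)
   = (\<Sum>i\<in>UNIV. y (Some i) * a$i$j) / 2"
  by (simp add: mult_Some)

lemma mult_h_Some: "eacp_mult a b (\<lambda>k. if k = Some j0 then 1 else 0) y (Some l)
   = y None * a$j0$l / 2"
  proof -
  have "\<And>i. ((if Some i = Some j0 then 1 else 0) * y None + 0 * y (Some i)) * a$i$l
     = (if i = j0 then y None * a$j0$l else 0)" by simp
  then show ?thesis by (simp only: mult_Some) simp
qed

lemma mult_h_None: "eacp_mult a b (\<lambda>k. if k = Some j0 then 1 else 0) y None
   = y None * b$j0 / 2"
  proof -
  have "\<And>i. ((if Some i = Some j0 then 1 else 0) * y None + 0 * y (Some i)) * b$i
     = (if i = j0 then y None * b$j0 else 0)" by simp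
  then show ?thesis by (simp only: mult_None) simp
qed

theorem mainTheorem12:
  fixes a :: "'a::field^'n::finite^'n" and b :: "'a^'n"
  assumes "(2::'a) \<noteq> 0"
    and "det a \<noteq> 0"
  shows "eacp_centroid a b = {(\<lambda>x k. c * x k) | c. True}
         \<and> inj (\<lambda>c::'a. (\<lambda>x::'n option \<Rightarrow> 'a. \<lambda>k. c * x k))"
proof (intro conjI)
  show "inj (\<lambda>c::'a. (\<lambda>x::'n option \<Rightarrow> 'a. \<lambda>k. c * x k))"
  proof (rule injI)
    fix c d :: 'a
    assume "(\<lambda>x::'n option \<Rightarrow> 'a. \<lambda>k. c * x k) = (\<lambda>x k. d * x k)"
    then have "(\<lambda>k::'n option. c * 1) = (\<lambda>k. d * 1)" by metis
    then show "c = d" by (metis mult_1_right)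
  qed
  obtain j0 l0 where a0: "a$j0$l0 \<noteq> 0"
  proof -
    have False if "\<forall>j l. a$j$l = 0"
    proof -
      have "(\<lambda>_::'n. 1::'a) undefined = 0"
        by (rule ker[OF assms(2)]) (simp add: that)
      then show False by simp
    qed
    then show ?thesis using that by blast
  qed
  define r :: "'n option \<Rightarrow> 'a" where "r = (\<lambda>k. if k = None then 1 else 0)"
  have rN: "r None = 1" and rS: "\<And>i. r (Some i) = 0" by (simp_all add: r_def)
  define h :: "'n option \<Rightarrow> 'a" where "h = (\<lambda>k. if k = Some j0 then 1 else 0)"
  show "eacp_centroid a b = {(\<lambda>x k. c * x k) | c. True}"
  proof (intro equalityI subsetI)
    fix T :: "('n option \<Rightarrow> 'a) \<Rightarrow> 'n option \<Rightarrow> 'a" assume "T \<in> eacp_centroid a b"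
    then have lin: "\<And>c z. T (\<lambda>k. c * z k) = (\<lambda>k. c * T z k)"
      and cen: "\<And>x y. T (eacp_mult a b x y) = eacp_mult a b x (T y)"
      unfolding eacp_centroid_def coord_linear_def by auto
    have zero: "T (\<lambda>k. 0) = (\<lambda>k. 0)" using lin[of 0 "\<lambda>k. 0"] by simp
    have rr: "eacp_mult a b r r = (\<lambda>k. 0)"
      apply (rule ext)
      subgoal for k by (cases k) (simp_all add: r_def mult_Some mult_None)
      done
    have rTr: "eacp_mult a b r (T r) = (\<lambda>k. 0)" using cen[of r r] rr zero by simp
    have s0: "(\<Sum>i\<in>UNIV. T r (Some i) * a$i$j) = 0" for j
    proof -
      have "eacp_mult a b r (T r) (Some j) = 0" using rTr by simp
      then have "(\<Sum>i\<in>UNIV. T r (Some i) * a$i$j) / 2 = 0"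
        unfolding r_def mult_r_Some .
      then show ?thesis using assms(1) by simp
    qed
    have Tr0: "T r (Some i) = 0" for i
      by (rule ker[OF assms(2)]) (rule s0)
    define s where "s = T r None"
    have Tr: "T r = (\<lambda>k. s * r k)"
      apply (rule ext)
      subgoal for k by (cases k) (simp_all add: rN rS s_def Tr0)
      done
    have "T x = (\<lambda>k. s * x k)" for x
    proof -
      have e1: "eacp_mult a b r (T x) = eacp_mult a b x (\<lambda>k. s * r k)"
        using cen[of r x] cen[of x r] mult_comm[of a b r x] Tr by simp
      have s1: "(\<Sum>i\<in>UNIV. (T x (Some i) - s * x (Some i)) * a$i$j) = 0" for j
      proof -
        have "(\<Sum>i\<in>UNIV. T x (Some i) * a$i$j) / 2 = (\<Sum>i\<in>UNIV. x (Some i) * (s * 1) * a$i$j) / 2"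
          using fun_cong[OF e1, of "Some j"] unfolding r_def mult_r_Some by (simp add: mult_Some)
        then have "(\<Sum>i\<in>UNIV. T x (Some i) * a$i$j) = (\<Sum>i\<in>UNIV. s * x (Some i) * a$i$j)"
          using assms(1) by (simp add: ac_simps)
        then show ?thesis by (simp add: sum_subtractf left_diff_distrib)
      qed
      have hs: "T x (Some i) = s * x (Some i)" for i
      proof -
        have "T x (Some i) - s * x (Some i) = 0"
          by (rule ker[OF assms(2)]) (rule s1)
        then show ?thesis by simp
      qed
      have hx: "eacp_mult a b h x = (\<lambda>k. x None * eacp_mult a b h r k)"
        apply (rule ext)
        subgoal for k by (cases k) (simp_all add: h_def r_def mult_h_Some mult_h_None)
        done
      have "eacp_mult a b h (T x) = T (eacp_mult a b h x)" using cen[of h x] by simp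
      also have "\<dots> = (\<lambda>k. x None * T (eacp_mult a b h r) k)" using hx lin by simp
      also have "\<dots> = (\<lambda>k. x None * eacp_mult a b h (\<lambda>k. s * r k) k)" using cen[of h r] Tr by simp
      finally have E: "eacp_mult a b h (T x) (Some l0) = x None * eacp_mult a b h (\<lambda>k. s * r k) (Some l0)"
        by simp
      then have "T x None * a$j0$l0 / 2 = x None * ((\<lambda>k. s * r k) None * a$j0$l0 / 2)"
        unfolding h_def mult_h_Some .
      then have "T x None * a$j0$l0 / 2 = x None * (s * 1 * a$j0$l0 / 2)"
        by (simp add: r_def)
      then have "T x None * a$j0$l0 = (s * x None) * a$j0$l0"
        using assms(1) by (simp add: ac_simps)
      then have hn: "T x None = s * x None" using a0 by simp
      show ?thesis
        apply (rule ext)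
        subgoal for k by (cases k) (simp_all add: hs hn)
        done
    qed
    then show "T \<in> {(\<lambda>x k. c * x k) | c. True}" by blast
  next
    fix T :: "('n option \<Rightarrow> 'a) \<Rightarrow> 'n option \<Rightarrow> 'a" assume "T \<in> {(\<lambda>x k. c * x k) | c. True}"
    then obtain c where T: "T = (\<lambda>x k. c * x k)" by blast
    have m: "eacp_mult a b x (\<lambda>k. c * y k) = (\<lambda>k. c * eacp_mult a b x y k)" for x y
      apply (rule ext)
      subgoal for k by (cases k) (simp_all add: mult_Some mult_None sum_distrib_left algebra_simps)
      done
    show "T \<in> eacp_centroid a b"
      unfolding eacp_centroid_def coord_linear_def T
    proof (intro CollectI conjI allI)
      fix x y
      show "(\<lambda>k. c * eacp_mult a b x y k) = eacp_mult a b x (\<lambda>k. c * y k)" using m by simp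
      show "(\<lambda>k. c * eacp_mult a b y x k) = eacp_mult a b (\<lambda>k. c * y k) x"
        using m[of x y] mult_comm by metis
    qed (auto simp: algebra_simps)
  qed
qed

end
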